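(* Let $p$ be a prime and $q=p^n$ with $n$ odd and $q\equiv 1 \pmod 3$; let $\xi\in\mathbb{F}_p^\times$ be a nonsquare in $\mathbb{F}_p$ (hence, $n$ being odd, also a nonsquare in $\mathbb{F}_q$). Let $\delta\in\mathbb{F}_q$ be a cubic nonresidue, and let $\mathbb{F}_q(\delta^{1/3})$ be the cubic extension with $\mathbb{F}_q$-basis $\{1,\delta^{1/3},\delta^{2/3}\}$; write $\alpha=\alpha_1+\alpha_2\delta^{1/3}+\alpha_3\delta^{2/3}$ with $\alpha_i\in\mathbb{F}_q$. Let $\mathbb{H}_q=\{(\alpha,\beta)\in \mathbb{F}_q(\delta^{1/3})^2 : \alpha_2\beta_3-\alpha_3\beta_2\neq 0\}$ with the action of $\mathrm{GL}_3(\mathbb{F}_q)$ given by \[ \begin{bmatrix} a & b & c\\ d & e & f\\ r & s & t \end{bmatrix} (\alpha,\beta) = \left(\frac{a\alpha+b\beta+c}{r\alpha+s\beta+t}, \frac{d\alpha+e\beta+f}{r\alpha+s\beta+t} \right). \] Let \[H=\left\{\begin{bmatrix} a & b\xi & 0\\ b & a & 0\\ 0 & 0 & c\end{bmatrix} : a,b,c\in\mathbb{F}_q,\ c(a^2-b^2\xi)\neq 0\right\}.\] Then \[\left\{\left(x+u\delta^{1/3}+v\delta^{2/3},\,y+\delta^{1/3}\right) : v\in\mathbb{F}_q^\times,\ x,y,u\in\mathbb{F}_q\right\}\] is a fundamental domain for the action of $H$ on $\mathbb{H}_q$.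
   Context: A fundamental domain for the action of a subgroup $H$ on $\mathbb{H}_q$ is a subset of $\mathbb{H}_q$ containing exactly one element of each $H$-orbit. A cubic nonresidue is an element of $\mathbb{F}_q^\times$ that is not a cube in $\mathbb{F}_q$. The group $H$ is the centralizer in $\mathrm{GL}_3(\mathbb{F}_q)$ of a matrix $\begin{bmatrix}k&l\xi&0\\l&k&0\\0&0&m\end{bmatrix}$ with $k\in\mathbb{F}_p$, $l,m\in\mathbb{F}_p^\times$. *)

theory Defs
  imports "HOL-Analysis.Cartesian_Space" "HOL-Computational_Algebra.Primes"
begin

text \<open>Elements of the cubic extension F_q(delta^(1/3)) are represented by their coordinates
  (a1, a2, a3) with respect to the F_q-basis 1, delta^(1/3), delta^(2/3).\<close>

type_synonym 'a cubext = "'a \<times> 'a \<times> 'a"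

definition cx_of :: "'a::field \<Rightarrow> 'a cubext" where
  "cx_of c = (c, 0, 0)"

definition cx_add :: "'a::field cubext \<Rightarrow> 'a cubext \<Rightarrow> 'a cubext" where
  "cx_add x y = (case x of (a1,a2,a3) \<Rightarrow> case y of (b1,b2,b3) \<Rightarrow> (a1+b1, a2+b2, a3+b3))"

definition cx_smult :: "'a::field \<Rightarrow> 'a cubext \<Rightarrow> 'a cubext" where
  "cx_smult c x = (case x of (a1,a2,a3) \<Rightarrow> (c*a1, c*a2, c*a3))"

text \<open>Multiplication in F_q[t]/(t^3 - delta).\<close>
definition cx_mult :: "'a::field \<Rightarrow> 'a cubext \<Rightarrow> 'a cubext \<Rightarrow> 'a cubext" where
  "cx_mult \<delta> x y = (case x of (a1,a2,a3) \<Rightarrow> case y of (b1,b2,b3) \<Rightarrow>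
     (a1*b1 + \<delta>*(a2*b3 + a3*b2), a1*b2 + a2*b1 + \<delta>*(a3*b3), a1*b3 + a2*b2 + a3*b1))"

definition cx_inverse :: "'a::field \<Rightarrow> 'a cubext \<Rightarrow> 'a cubext" where
  "cx_inverse \<delta> x = (SOME y. cx_mult \<delta> x y = cx_of 1)"

definition cx_divide :: "'a::field \<Rightarrow> 'a cubext \<Rightarrow> 'a cubext \<Rightarrow> 'a cubext" where
  "cx_divide \<delta> x y = cx_mult \<delta> x (cx_inverse \<delta> y)"

definition Hq :: "('a::field cubext \<times> 'a cubext) set" where
  "Hq = {(\<alpha>, \<beta>). fst (snd \<alpha>) * snd (snd \<beta>) - snd (snd \<alpha>) * fst (snd \<beta>) \<noteq> 0}"

definition mat_act :: "'a::field \<Rightarrow> 'a^3^3 \<Rightarrow> ('a cubext \<times> 'a cubext) \<Rightarrow> ('a cubext \<times> 'a cubext)" where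
  "mat_act \<delta> M z = (case z of (\<alpha>, \<beta>) \<Rightarrow>
     (let den = cx_add (cx_add (cx_smult (M$3$1) \<alpha>) (cx_smult (M$3$2) \<beta>)) (cx_of (M$3$3)) in
      (cx_divide \<delta> (cx_add (cx_add (cx_smult (M$1$1) \<alpha>) (cx_smult (M$1$2) \<beta>)) (cx_of (M$1$3))) den,
       cx_divide \<delta> (cx_add (cx_add (cx_smult (M$2$1) \<alpha>) (cx_smult (M$2$2) \<beta>)) (cx_of (M$2$3))) den)))"

definition Hgrp :: "'a::field \<Rightarrow> ('a^3^3) set" where
  "Hgrp \<xi> = {M. \<exists>a b c. M = vector [vector [a, b*\<xi>, 0], vector [b, a, 0], vector [0, 0, c]]
                        \<and> c * (a^2 - b^2 * \<xi>) \<noteq> 0}"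

definition fundamental_domain :: "'g set \<Rightarrow> ('g \<Rightarrow> 'x \<Rightarrow> 'x) \<Rightarrow> 'x set \<Rightarrow> 'x set \<Rightarrow> bool" where
  "fundamental_domain G act X D \<longleftrightarrow>
     D \<subseteq> X \<and> (\<forall>z\<in>X. \<exists>!w. w \<in> D \<and> (\<exists>g\<in>G. act g z = w))"

end

theory Submission imports Defs "HOL-Computational_Algebra.Polynomial"
begin

lemma ff_pow_card:
  fixes x :: "'a :: {field,finite}"
  shows "x ^ card (UNIV :: 'a set) = x"
proof (cases "x = 0")
  case False
  have "x * (\<Prod>y\<in>UNIV-{0}. x * y) = x * x ^ (card (UNIV :: 'a set) - 1) * \<Prod>(UNIV-{0})"
    by (simp add: prod.distrib mult_ac)
  also have "x * x ^ (card (UNIV :: 'a set) - 1) = x ^ Suc (card (UNIV :: 'a set) - 1)"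
    by (subst power_Suc) auto
  also have "Suc (card (UNIV :: 'a set) - 1) = card (UNIV :: 'a set)"
    using finite_UNIV_card_ge_0[where ?'a = 'a] by simp
  also have "(\<Prod>y\<in>UNIV-{0}. x * y) = (\<Prod>y\<in>UNIV-{0}. y)"
    by (rule prod.reindex_bij_witness[of _ "\<lambda>y. y / x" "\<lambda>y. x * y"]) (use False in auto)
  finally show ?thesis
    by simp
qed (use finite_UNIV_card_ge_0[where ?'a = 'a] in auto)

lemma ff_card_zero:
  "of_nat (card (UNIV :: 'a::{field,finite} set)) = (0::'a)"
proof -
  have "(\<Sum>y\<in>(UNIV::'a set). y + 1) = (\<Sum>y\<in>UNIV. y)"
    by (rule sum.reindex_bij_witness[of _ "\<lambda>y. y - 1" "\<lambda>y. y + 1"]) auto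
  then show ?thesis by (simp add: sum.distrib)
qed

lemma ff_CHAR:
  assumes "prime p" "CARD('a::{field,finite}) = p ^ n"
  shows "CHAR('a) = p"
proof -
  have pos: "CHAR('a) > 0" by (rule finite_imp_CHAR_pos) simp
  have pr: "prime CHAR('a)" by (rule prime_CHAR_semidom[OF pos])
  have "of_nat (p ^ n) = (0::'a)" using ff_card_zero[where 'a='a] assms(2) by simp
  then have "CHAR('a) dvd p ^ n" using of_nat_eq_0_iff_char_dvd by blast
  then have "CHAR('a) dvd p" using pr prime_dvd_power by blast
  then show ?thesis using pr assms(1) primes_dvd_imp_eq by blast
qed

lemma ff_fermat:
  assumes "prime CHAR('a::comm_ring_1)"
  shows "(of_nat k :: 'a) ^ CHAR('a) = of_nat k"
proof (induction k)
  case 0 then show ?case using prime_gt_0_nat[OF assms] by (simp add: zero_power)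
next
  case (Suc k)
  have "(of_nat k + 1 :: 'a) ^ CHAR('a) = of_nat k ^ CHAR('a) + 1 ^ CHAR('a)"
    by (rule freshmans_dream[OF assms refl])
  then show ?case using Suc by (simp add: add.commute)
qed

lemma ff_prime_field:
  assumes "prime CHAR('a::{field,finite})" "y ^ CHAR('a) = (y::'a)"
  shows "y \<in> range of_nat"
proof -
  define p where "p = CHAR('a)"
  have p2: "p \<ge> 2" using assms(1) prime_ge_2_nat p_def by blast
  define P where "P = monom (1::'a) p + [:0,-1:]"
  have degP: "degree P = p" unfolding P_def using p2
    by (subst degree_add_eq_left) (auto simp: degree_monom_eq)
  have "P \<noteq> 0" using degP p2 by auto
  then have cb: "card {x. poly P x = 0} \<le> p" using card_poly_roots_bound degP by metis
  have roots: "{x. poly P x = 0} = {x. x ^ p = x}" by (auto simp: P_def poly_monom)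
  have sub: "of_nat ` {..<p} \<subseteq> {x::'a. x ^ p = x}"
    using ff_fermat[OF assms(1)] p_def by auto
  have inj: "inj_on (of_nat :: nat \<Rightarrow> 'a) {..<p}"
  proof (rule inj_onI)
    fix i j assume i: "i \<in> {..<p}" and j: "j \<in> {..<p}" and e: "(of_nat i::'a) = of_nat j"
    show "i = j"
    proof (rule ccontr)
      assume "i \<noteq> j"
      then consider "i < j" | "j < i" by linarith
      then show False
      proof cases
        case 1
        then have "p dvd (j - i)" using e of_nat_eq_iff_char_dvd p_def by blast
        then show False using 1 j by (auto dest: dvd_imp_le)
      next
        case 2
        then have "p dvd (i - j)" using e of_nat_eq_iff_char_dvd p_def by metis
        then show False using 2 i by (auto dest: dvd_imp_le)
      qed
    qed
  qed
  have cardS: "card (of_nat ` {..<p} :: 'a set) = p" using card_image[OF inj] by simp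
  have "of_nat ` {..<p} = {x::'a. x ^ p = x}"
  proof (rule card_subset_eq)
    have "card (of_nat ` {..<p} :: 'a set) \<le> card {x::'a. x ^ p = x}" by (rule card_mono[OF _ sub]) simp
    then show "card (of_nat ` {..<p} :: 'a set) = card {x::'a. x ^ p = x}" using cardS cb roots by simp
  qed (use sub in auto)
  then show ?thesis using assms(2) p_def by auto
qed


lemma ff_nonsquare:
  fixes \<xi> :: "'a::{field,finite}"
  assumes "prime p" and "CARD('a) = p ^ n" and "odd n"
    and "\<xi> \<in> range of_nat"
    and "\<forall>y \<in> range (of_nat :: nat \<Rightarrow> 'a). y^2 \<noteq> \<xi>"
  shows "y ^ 2 \<noteq> \<xi>"
proof
  assume y: "y ^ 2 = \<xi>"
  have C: "CHAR('a) = p" using ff_CHAR assms(1,2) by blast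
  have pC: "prime CHAR('a)" using C assms(1) by simp
  obtain k where k: "\<xi> = of_nat k" using assms(4) by auto
  have xp: "\<xi> ^ p = \<xi>" using ff_fermat[OF pC, of k] C k by simp
  have "(y ^ p) ^ 2 = y ^ 2"
    by (metis xp y power_mult mult.commute)
  then have "y ^ p = y \<or> y ^ p = - y" by (simp add: power2_eq_iff)
  moreover have "y ^ p = - y \<Longrightarrow> y ^ p = y"
  proof -
    assume m: "y ^ p = - y"
    have "y ^ (p ^ j) = (if even j then y else - y)" for j
    proof (induction j)
      case 0 then show ?case by simp
    next
      case (Suc j)
      have "y ^ (p ^ Suc j) = (y ^ (p ^ j)) ^ p" by (metis power_Suc power_mult mult.commute)
      also have "\<dots> = (if even (Suc j) then y else - y)"
        using Suc minus_power_prime_CHAR[of p y] C assms(1) m by auto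
      finally show ?case .
    qed
    then have "y ^ (p ^ n) = - y" using assms(3) by simp
    moreover have "y ^ (p ^ n) = y" using ff_pow_card[of y] assms(2) by simp
    ultimately have "y = - y" by simp
    then show "y ^ p = y" using m by simp
  qed
  ultimately have "y ^ p = y" by blast
  then have "y \<in> range of_nat" using ff_prime_field[OF pC] C by simp
  then show False using assms(5) y by blast
qed

lemma cx_inv_const:
  assumes "(c::'a::field) \<noteq> 0"
  shows "cx_inverse \<delta> (c, 0, 0) = (1/c, 0, 0)"
  unfolding cx_inverse_def
proof (rule some_equality)
  show "cx_mult \<delta> (c, 0, 0) (1 / c, 0, 0) = cx_of 1"
    using assms by (simp add: cx_mult_def cx_of_def)
next
  fix y assume "cx_mult \<delta> (c, 0, 0) y = cx_of 1"
  then show "y = (1 / c, 0, 0)" using assms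
    by (cases y) (auto simp: cx_mult_def cx_of_def field_simps)
qed

lemma act_H:
  assumes "(c::'a::field) \<noteq> 0"
  shows "mat_act \<delta> (vector [vector [a, b*\<xi>, 0], vector [b, a, 0], vector [0, 0, c]])
           ((a1,a2,a3),(b1,b2,b3)) =
         (((a*a1+b*\<xi>*b1)/c, (a*a2+b*\<xi>*b2)/c, (a*a3+b*\<xi>*b3)/c),
          ((b*a1+a*b1)/c, (b*a2+a*b2)/c, (b*a3+a*b3)/c))"
  using assms
  by (simp add: mat_act_def cx_divide_def cx_add_def cx_smult_def cx_of_def cx_inv_const
        cx_mult_def Let_def field_simps)


theorem proposition6p1:
  fixes p n :: nat and \<xi> \<delta> :: "'a::{field, finite}"
  assumes "prime p" and "CARD('a) = p ^ n" and "odd n"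
    and "CARD('a) mod 3 = 1"
    and "\<xi> \<in> range of_nat" and "\<xi> \<noteq> 0"
    and "\<forall>y \<in> range (of_nat :: nat \<Rightarrow> 'a). y^2 \<noteq> \<xi>"
    and "\<delta> \<noteq> 0" and "\<forall>y::'a. y^3 \<noteq> \<delta>"
  shows "fundamental_domain (Hgrp \<xi>) (mat_act \<delta>) Hq
           {((x, u, v), (y, 1, 0)) | x y u v. v \<noteq> 0}"
proof -
  have nsq: "y ^ 2 \<noteq> \<xi>" for y
    using ff_nonsquare[OF assms(1,2,3,5,7)] by blast
  have key: "s ^ 2 - t ^ 2 * \<xi> \<noteq> 0" if "s \<noteq> 0 \<or> t \<noteq> 0" for s t :: 'a
  proof
    assume h: "s ^ 2 - t ^ 2 * \<xi> = 0"
    show False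
    proof (cases "t = 0")
      case True then show False using h that by simp
    next
      case False
      have "(s / t) ^ 2 = \<xi>" using h False by (simp add: field_simps power2_eq_square)
      then show False using nsq by blast
    qed
  qed
  let ?D = "{((x, u, v), (y, 1, 0)) | x y u v. v \<noteq> (0::'a)}"
  have sub: "?D \<subseteq> Hq" by (auto simp: Hq_def)
  have uniq: "\<exists>!w. w \<in> ?D \<and> (\<exists>g\<in>Hgrp \<xi>. mat_act \<delta> g z = w)" if zH: "z \<in> Hq" for z
  proof -
    obtain a1 a2 a3 b1 b2 b3 where z: "z = ((a1,a2,a3),(b1,b2,b3))" by (cases z) auto
    define e where "e = b2*a3 - a2*b3"
    have e0: "e \<noteq> 0" using zH z by (auto simp: Hq_def e_def algebra_simps)
    define A where "A = a3 / e"
    define B where "B = - b3 / e"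
    have nz: "a3 \<noteq> 0 \<or> b3 \<noteq> 0" using e0 e_def by auto
    define w0 where "w0 = ((A*a1+B*\<xi>*b1, A*a2+B*\<xi>*b2, A*a3+B*\<xi>*b3), (B*a1+A*b1, 1::'a, 0::'a))"
    have v0: "A*a3+B*\<xi>*b3 \<noteq> 0"
    proof -
      have "A*a3+B*\<xi>*b3 = (a3^2 - b3^2*\<xi>) / e" using e0
        by (simp add: A_def B_def field_simps power2_eq_square)
      then show ?thesis using key[OF nz] e0 by simp
    qed
    have w0D: "w0 \<in> ?D" using v0 unfolding w0_def by auto
    define g where "g = (vector [vector [A, B*\<xi>, 0], vector [B, A, 0], vector [0, 0, 1]] :: 'a^3^3)"
    have gH: "g \<in> Hgrp \<xi>"
    proof -
      have "A \<noteq> 0 \<or> B \<noteq> 0" using nz e0 by (auto simp: A_def B_def)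
      then have "1 * (A^2 - B^2*\<xi>) \<noteq> 0" using key by simp
      then show ?thesis unfolding Hgrp_def g_def
        by (intro CollectI exI[of _ A] exI[of _ B] exI[of _ 1] conjI refl) simp
    qed
    have e1: "B*a2 + A*b2 = 1"
    proof -
      have "B*a2 + A*b2 = (-(b3*a2)) / e + (a3*b2)/e" by (simp add: A_def B_def)
      also have "\<dots> = (-(b3*a2) + a3*b2)/e" by (simp only: add_divide_distrib[symmetric])
      also have "(-(b3*a2) + a3*b2)/e = (b2*a3 - a2*b3)/e" by (simp add: algebra_simps)
      also have "\<dots> = 1" using e0 unfolding e_def by simp
      finally show ?thesis .
    qed
    have e2: "B*a3 + A*b3 = 0" using e0 by (simp add: A_def B_def field_simps)
    have gz: "mat_act \<delta> g z = w0"
    proof -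
      have "mat_act \<delta> g z = (((A*a1+B*\<xi>*b1)/1, (A*a2+B*\<xi>*b2)/1, (A*a3+B*\<xi>*b3)/1),
          ((B*a1+A*b1)/1, (B*a2+A*b2)/1, (B*a3+A*b3)/1))"
        unfolding g_def z by (rule act_H) simp
      also have "\<dots> = w0" by (simp only: div_by_1 e1 e2 w0_def)
      finally show ?thesis .
    qed
    show ?thesis
    proof (rule ex1I[of _ w0])
      show "w0 \<in> ?D \<and> (\<exists>g\<in>Hgrp \<xi>. mat_act \<delta> g z = w0)" using w0D gH gz by (intro conjI bexI[of _ g])
    next
      fix w assume wa: "w \<in> ?D \<and> (\<exists>g\<in>Hgrp \<xi>. mat_act \<delta> g z = w)"
      then have "w \<in> ?D" by (rule conjunct1)
      then obtain x y u v where w: "w = ((x, u, v), (y, 1, 0))" by (auto simp only: mem_Collect_eq)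
      obtain h where hH: "h \<in> Hgrp \<xi>" and hz: "mat_act \<delta> h z = w" using wa by (elim conjE bexE)
      obtain a b c where h: "h = vector [vector [a, b*\<xi>, 0], vector [b, a, 0], vector [0, 0, c]]"
        and c: "c * (a^2 - b^2 * \<xi>) \<noteq> 0" using hH unfolding Hgrp_def mem_Collect_eq by (elim exE conjE)
      have c0: "c \<noteq> 0" using c by auto
      have act: "mat_act \<delta> h z = (((a*a1+b*\<xi>*b1)/c, (a*a2+b*\<xi>*b2)/c, (a*a3+b*\<xi>*b3)/c),
          ((b*a1+a*b1)/c, (b*a2+a*b2)/c, (b*a3+a*b3)/c))"
        unfolding h z by (rule act_H[OF c0])
      have eq: "(((a*a1+b*\<xi>*b1)/c, (a*a2+b*\<xi>*b2)/c, (a*a3+b*\<xi>*b3)/c),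
          ((b*a1+a*b1)/c, (b*a2+a*b2)/c, (b*a3+a*b3)/c)) = ((x, u, v), (y, 1, 0))"
        unfolding act[symmetric] using hz w by simp
      then have r1: "(b*a2+a*b2)/c = 1" and r2: "(b*a3+a*b3)/c = 0" using c0 by auto
      have q1: "b*a2+a*b2 = c" using r1 c0 by (simp add: divide_eq_1_iff)
      have q2: "b*a3+a*b3 = 0" using r2 c0 by simp
      have "a * e = a3 * c" unfolding e_def
      proof -
        have "a * (b2 * a3 - a2 * b3) = a3 * (b*a2+a*b2) - a2 * (b*a3+a*b3)" by algebra
        then show "a * (b2 * a3 - a2 * b3) = a3 * c" using q1 q2 by simp
      qed
      then have aA: "a = A * c" using e0 by (simp add: A_def field_simps)
      have "b * e = - b3 * c" unfolding e_def
      proof -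
        have "b * (b2 * a3 - a2 * b3) = b2 * (b*a3+a*b3) - b3 * (b*a2+a*b2)" by algebra
        then show "b * (b2 * a3 - a2 * b3) = - b3 * c" using q1 q2 by simp
      qed
      then have bB: "b = B * c" using e0 by (simp add: B_def field_simps)
      have "w = (((a*a1+b*\<xi>*b1)/c, (a*a2+b*\<xi>*b2)/c, (a*a3+b*\<xi>*b3)/c),
          ((b*a1+a*b1)/c, 1, 0))" unfolding w using eq by simp
      also have "\<dots> = w0" unfolding w0_def aA bB using c0 by (simp add: field_simps)
      finally show "w = w0" .
    qed
  qed
  show ?thesis unfolding fundamental_domain_def using sub uniq by (intro conjI ballI) simp_all
qed

end
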